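(* Consider a birth-death process with mass-action kinetics and dynamics $\dot s=f(s)=B(s)-D(s)$, where $B(s)=\sum_{n\ge0}\kappa_ns^n$ and $D(s)=\sum_{n\ge1}\kappa_{-n}s^n$, and suppose $\kappa_0>0$ and either $n_d>n_u$, or $n_d=n_u$ and $\kappa_{-n_d}>\kappa_{n_u}$. Suppose $\bar s$ is the unique positive equilibrium of $f$ and $f'(\bar s)\neq0$. Let $$V(s)=\int_{\bar s}^{s}\ln\!\left(\frac{D(v)}{B(v)}\right)\mathrm{d}v .$$ Then $V(s)\ge0$ for all $s\ge0$, with equality if and only if $s=\bar s$, and $V$ is a Lyapunov function ensuring that $\bar s$ is globally asymptotically stable (it is stable and every solution with $s(0)\ge0$ converges to $\bar s$).
   Context: A birth-death process is a CRN with a single species $S$ in which every reaction has the form $nS\to(n+1)S$ or $nS\to(n-1)S$ ($0S$ denotes the empty complex). Under mass-action kinetics, $\kappa_n\ge0$ is the rate constant of $nS\to(n+1)S$ and $\kappa_{-n}\ge0$ that of $nS\to(n-1)S$ (zero if absent). $n_u$ is the largest $n$ with $\kappa_n>0$ and $n_d$ the largest $n$ with $\kappa_{-n}>0$. *)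

theory Defs
  imports "HOL-Analysis.Analysis"
begin

text \<open>Birth-death mass-action network. Rate constants are given by two functions:
  kb n = kappa_n (rate of nS -> (n+1)S, n >= 0) and
  kd n = kappa_{-n} (rate of nS -> (n-1)S, only n >= 1 is meaningful).\<close>

definition birth :: "(nat \<Rightarrow> real) \<Rightarrow> real \<Rightarrow> real" where
  "birth kb s = (\<Sum>n\<in>{n. kb n \<noteq> 0}. kb n * s ^ n)"

definition death :: "(nat \<Rightarrow> real) \<Rightarrow> real \<Rightarrow> real" where
  "death kd s = (\<Sum>n\<in>{n. 1 \<le> n \<and> kd n \<noteq> 0}. kd n * s ^ n)"

definition n_u :: "(nat \<Rightarrow> real) \<Rightarrow> nat" where
  "n_u kb = (GREATEST n. kb n > 0)"

definition n_d :: "(nat \<Rightarrow> real) \<Rightarrow> nat" where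
  "n_d kd = (GREATEST n. 1 \<le> n \<and> kd n > 0)"

definition is_solution :: "(real \<Rightarrow> real) \<Rightarrow> (real \<Rightarrow> real) \<Rightarrow> bool" where
  "is_solution f x \<longleftrightarrow> (\<forall>t\<ge>0. (x has_real_derivative f (x t)) (at t within {0..}))"

end

theory Submission
  imports Defs "HOL-Real_Asymp.Real_Asymp"
begin


locale bdp =
  fixes kb kd :: "nat \<Rightarrow> real" and sbar :: real
  assumes kb_nonneg: "\<And>n. kb n \<ge> 0" and kd_nonneg: "\<And>n. kd n \<ge> 0"
      and kb_fin: "finite {n. kb n \<noteq> 0}" and kd_fin: "finite {n. kd n \<noteq> 0}"
      and k0: "kb 0 > 0"
      and death_ex: "\<exists>n\<ge>1. kd n > 0"
      and degree: "n_d kd > n_u kb \<or> (n_d kd = n_u kb \<and> kd (n_d kd) > kb (n_u kb))"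
      and sbar_pos: "sbar > 0" and sbar_eq: "birth kb sbar - death kd sbar = 0"
      and sbar_unique: "\<And>s. s > 0 \<Longrightarrow> birth kb s - death kd s = 0 \<Longrightarrow> s = sbar"
begin

abbreviation "B \<equiv> birth kb"
abbreviation "D \<equiv> death kd"
abbreviation "F \<equiv> (\<lambda>s. birth kb s - death kd s)"

lemma B_cont: "isCont B s"
  unfolding birth_def by (intro continuous_intros)
lemma D_cont: "isCont D s"
  unfolding death_def by (intro continuous_intros)
lemma F_cont: "isCont F s"
  using B_cont D_cont by (intro continuous_intros)
lemma F_cont_on: "continuous_on S F"
  using F_cont by (simp add: continuous_at_imp_continuous_on)

lemma kdfin1: "finite {n. 1 \<le> n \<and> kd n \<noteq> 0}"
  by (rule finite_subset[OF _ kd_fin]) auto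

lemma B_ge: assumes "s \<ge> 0" "kb m \<noteq> 0" shows "kb m * s ^ m \<le> B s"
  unfolding birth_def
  by (rule member_le_sum[where f="\<lambda>n. kb n * s ^ n"]) (use assms kb_fin kb_nonneg in auto)

lemma B_pos: assumes "s \<ge> 0" shows "B s > 0"
  using B_ge[OF assms, of 0] k0 by simp

lemma D_ge: assumes "s \<ge> 0" "kd m \<noteq> 0" "1 \<le> m" shows "kd m * s ^ m \<le> D s"
  unfolding death_def
  by (rule member_le_sum[where f="\<lambda>n. kd n * s ^ n"]) (use assms kdfin1 kd_nonneg in auto)

lemma D_pos: assumes "s > 0" shows "D s > 0"
proof -
  obtain m where m: "m \<ge> 1" "kd m > 0" using death_ex by auto
  have "0 < kd m * s ^ m" using m assms by simp
  also have "\<dots> \<le> D s" using D_ge[of s m] m assms by simp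
  finally show ?thesis .
qed

lemma D_0: "D 0 = 0"
  unfolding death_def by (intro sum.neutral) auto


lemma nu_props: "kb (n_u kb) > 0" "\<And>n. kb n > 0 \<Longrightarrow> n \<le> n_u kb"
proof -
  have bnd: "\<And>y. kb y > 0 \<Longrightarrow> y \<le> Max {n. kb n \<noteq> 0}"
    using kb_fin by (intro Max_ge) auto
  show "kb (n_u kb) > 0" unfolding n_u_def
    by (rule GreatestI_nat[of _ 0]) (use k0 bnd in auto)
  show "\<And>n. kb n > 0 \<Longrightarrow> n \<le> n_u kb" unfolding n_u_def
    by (rule Greatest_le_nat) (use bnd in auto)
qed

lemma nd_props: "kd (n_d kd) > 0" "n_d kd \<ge> 1" "\<And>n. 1 \<le> n \<Longrightarrow> kd n > 0 \<Longrightarrow> n \<le> n_d kd"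
proof -
  have bnd: "\<And>y. 1 \<le> y \<and> kd y > 0 \<Longrightarrow> y \<le> Max {n. kd n \<noteq> 0}"
    using kd_fin by (intro Max_ge) auto
  obtain m where m: "m \<ge> 1" "kd m > 0" using death_ex by auto
  have "1 \<le> n_d kd \<and> kd (n_d kd) > 0" unfolding n_d_def
    by (rule GreatestI_nat[of _ m]) (use m bnd in auto)
  then show "kd (n_d kd) > 0" "n_d kd \<ge> 1" by auto
  show "\<And>n. 1 \<le> n \<Longrightarrow> kd n > 0 \<Longrightarrow> n \<le> n_d kd" unfolding n_d_def
    by (rule Greatest_le_nat) (use bnd in auto)
qed

definition "KB = (\<Sum>n\<in>{n. kb n \<noteq> 0}. kb n)"

lemma KB_nonneg: "KB \<ge> 0"
  unfolding KB_def by (intro sum_nonneg) (use kb_nonneg in auto)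

lemma B_upper: assumes "s \<ge> 1" shows "B s \<le> kb (n_u kb) * s ^ n_u kb + KB * s ^ (n_u kb - 1)"
proof -
  let ?S = "{n. kb n \<noteq> 0}" and ?u = "n_u kb"
  have u: "?u \<in> ?S" using nu_props(1) by auto
  have "B s = kb ?u * s ^ ?u + (\<Sum>n\<in>?S - {?u}. kb n * s ^ n)"
    unfolding birth_def using sum.remove[OF kb_fin u, of "\<lambda>n. kb n * s ^ n"] by simp
  also have "(\<Sum>n\<in>?S - {?u}. kb n * s ^ n) \<le> (\<Sum>n\<in>?S - {?u}. kb n * s ^ (?u - 1))"
  proof (rule sum_mono)
    fix n assume n: "n \<in> ?S - {?u}"
    then have "kb n > 0" using kb_nonneg[of n] by auto
    then have "n \<le> ?u" by (rule nu_props(2))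
    with n have "n \<le> ?u - 1" by auto
    then have "s ^ n \<le> s ^ (?u - 1)" using assms by (intro power_increasing) auto
    then show "kb n * s ^ n \<le> kb n * s ^ (?u - 1)" using kb_nonneg[of n] by (intro mult_left_mono) auto
  qed
  also have "\<dots> = (\<Sum>n\<in>?S - {?u}. kb n) * s ^ (?u - 1)" by (simp add: sum_distrib_right)
  also have "(\<Sum>n\<in>?S - {?u}. kb n) \<le> KB"
    unfolding KB_def by (rule sum_mono2) (use kb_fin kb_nonneg in auto)
  finally show ?thesis using assms by (simp add: mult_right_mono)
qed

lemma F_eventually_neg: "\<exists>S. \<forall>s\<ge>S. F s < 0"
proof -
  let ?u = "n_u kb" and ?d = "n_d kd"
  note nd = nd_props nu_props
  show ?thesis
  proof (cases "?d > ?u")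
    case True
    define S where "S = max 1 ((kb ?u + KB) / kd ?d + 1)"
    have "F s < 0" if s: "s \<ge> S" for s
    proof -
      have s1: "s \<ge> 1" using s unfolding S_def by auto
      have sbig: "s > (kb ?u + KB) / kd ?d" using s unfolding S_def by auto
      have "kd ?d * s > kb ?u + KB" using sbig nd(1) by (simp add: field_simps)
      have p: "s ^ (?u - 1) \<le> s ^ ?u" using s1 by (intro power_increasing) auto
      have "B s \<le> kb ?u * s ^ ?u + KB * s ^ ?u"
        using B_upper[OF s1] p KB_nonneg mult_left_mono[OF p KB_nonneg] by linarith
      moreover have "kd ?d * s ^ ?d \<le> D s" using D_ge[of s ?d] nd s1 by auto
      moreover have "s ^ Suc ?u \<le> s ^ ?d" using s1 True by (intro power_increasing) auto
      then have "kd ?d * s ^ Suc ?u \<le> kd ?d * s ^ ?d" using nd(1) by simp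
      moreover have "(kb ?u + KB) * s ^ ?u < kd ?d * s * s ^ ?u"
        using \<open>kd ?d * s > kb ?u + KB\<close> s1 by (intro mult_strict_right_mono) auto
      ultimately show ?thesis by (simp add: algebra_simps)
    qed
    then show ?thesis by blast
  next
    case False
    with degree have eq: "?d = ?u" and gt: "kd ?u > kb ?u" by auto
    have u1: "?u \<ge> 1" using nd eq by auto
    define S where "S = max 1 (KB / (kd ?u - kb ?u) + 1)"
    have "F s < 0" if s: "s \<ge> S" for s
    proof -
      have s1: "s \<ge> 1" using s unfolding S_def by auto
      have sbig: "s > KB / (kd ?u - kb ?u)" using s unfolding S_def by auto
      have k: "(kd ?u - kb ?u) * s > KB" using sbig gt by (simp add: field_simps)
      have pw: "s ^ ?u = s * s ^ (?u - 1)" using u1 by (metis Suc_diff_1 less_le_trans zero_less_one power_Suc)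
      have "kd ?u * s ^ ?u \<le> D s" using D_ge[of s ?d] nd s1 eq by auto
      moreover have "KB * s ^ (?u - 1) < (kd ?u - kb ?u) * s * s ^ (?u - 1)"
        using k s1 by (intro mult_strict_right_mono) auto
      ultimately show ?thesis using B_upper[OF s1] pw by (simp add: algebra_simps)
    qed
    then show ?thesis by blast
  qed
qed

lemma F_0: "F 0 > 0" using B_pos[of 0] D_0 by simp

lemma F_neg: assumes "s > sbar" shows "F s < 0"
proof (rule ccontr)
  assume "\<not> F s < 0"
  then have Fs: "F s \<ge> 0" by simp
  obtain S where S: "\<forall>s\<ge>S. F s < 0" using F_eventually_neg by blast
  define T where "T = max S s"
  have "F T < 0" using S unfolding T_def by auto
  have "s \<le> T" unfolding T_def by auto
  then obtain z where z: "s \<le> z" "z \<le> T" "F z = 0"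
    using IVT2[of F T 0 s] Fs F_cont \<open>F T < 0\<close> by auto
  then have "z = sbar" using sbar_unique[of z] assms sbar_pos by auto
  then show False using z assms by auto
qed

lemma F_pos: assumes "0 \<le> s" "s < sbar" shows "F s > 0"
proof (rule ccontr)
  assume "\<not> F s > 0"
  then obtain z where z: "0 \<le> z" "z \<le> s" "F z = 0"
    using IVT2[of F s 0 0] F_0 F_cont assms by auto
  then have "z \<noteq> 0" using F_0 by auto
  then have "z = sbar" using sbar_unique[of z] z by auto
  then show False using z assms by auto
qed


end

lemma last_below:
  fixes y :: "real \<Rightarrow> real"
  assumes "t0 \<le> t1" "continuous_on {t0..t1} y" "y t0 \<le> m" "y t1 > m"
  shows "\<exists>a. t0 \<le> a \<and> a < t1 \<and> y a \<le> m \<and> (\<forall>t. a < t \<and> t \<le> t1 \<longrightarrow> y t > m)"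
proof -
  let ?Z = "{t0..t1} \<inter> y -` {..m}"
  have "closed ?Z" using assms(2) by (intro continuous_closed_preimage) auto
  then have "compact ?Z" by (rule closed_Int_compact[of ?Z "{t0..t1}", simplified Int_absorb2[OF inf_le1]]) simp
  moreover have "?Z \<noteq> {}" using assms by auto
  ultimately obtain a where a: "a \<in> ?Z" "\<forall>t\<in>?Z. t \<le> a" using compact_attains_sup by blast
  have "a \<noteq> t1" using a assms by auto
  have "y t > m" if "a < t" "t \<le> t1" for t
  proof (rule ccontr)
    assume "\<not> y t > m"
    then have "t \<in> ?Z" using that a by auto
    then have "t \<le> a" using a(2) by blast
    then show False using that by simp
  qed
  then show ?thesis using a \<open>a \<noteq> t1\<close> by (intro exI[of _ a]) auto
qed

context bdp begin

lemma sol_cont: assumes "is_solution F x" shows "continuous_on {0..} x"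
  using assms unfolding is_solution_def
  by (auto simp: continuous_on_eq_continuous_within intro: DERIV_continuous)

lemma sol_deriv: assumes "is_solution F x" "t > 0" shows "(x has_real_derivative F (x t)) (at t)"
proof -
  have "(x has_real_derivative F (x t)) (at t within {0..})"
    using assms unfolding is_solution_def by simp
  then have "(x has_real_derivative F (x t)) (at t within {0<..})"
    by (rule has_field_derivative_subset) auto
  moreover have "at t within {0<..} = at t" by (rule at_within_open) (use assms(2) in auto)
  ultimately show ?thesis by simp
qed

lemma sol_incr: assumes "is_solution F x" "0 \<le> a" "a \<le> b" "\<And>t. a < t \<Longrightarrow> t < b \<Longrightarrow> F (x t) \<ge> 0"
  shows "x a \<le> x b"
proof (rule DERIV_nonneg_imp_increasing_open[of a b x, OF assms(3)])
  fix t assume t: "a < t" "t < b"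
  show "\<exists>y. (x has_real_derivative y) (at t) \<and> y \<ge> 0"
    using sol_deriv[OF assms(1), of t] assms(4)[OF t] t assms(2) by auto
next
  show "continuous_on {a..b} x" by (rule continuous_on_subset[OF sol_cont[OF assms(1)]]) (use assms(2) in auto)
qed

lemma sol_decr: assumes "is_solution F x" "0 \<le> a" "a \<le> b" "\<And>t. a < t \<Longrightarrow> t < b \<Longrightarrow> F (x t) \<le> 0"
  shows "x a \<ge> x b"
proof (rule DERIV_nonpos_imp_decreasing_open[of a b x, OF assms(3)])
  fix t assume t: "a < t" "t < b"
  show "\<exists>y. (x has_real_derivative y) (at t) \<and> y \<le> 0"
    using sol_deriv[OF assms(1), of t] assms(4)[OF t] t assms(2) by auto
next
  show "continuous_on {a..b} x" by (rule continuous_on_subset[OF sol_cont[OF assms(1)]]) (use assms(2) in auto)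
qed

lemma sol_nonneg: assumes sol: "is_solution F x" and x0: "x 0 \<ge> 0" and t1: "t1 \<ge> 0"
  shows "x t1 \<ge> 0"
proof (rule ccontr)
  assume "\<not> x t1 \<ge> 0"
  then have neg: "x t1 < 0" by simp
  have cy: "continuous_on {0..t1} (\<lambda>t. - x t)"
    using sol_cont[OF sol] by (intro continuous_intros) (auto intro: continuous_on_subset)
  obtain a where a: "0 \<le> a" "a < t1" "x a \<ge> 0" "\<And>t. a < t \<Longrightarrow> t \<le> t1 \<Longrightarrow> x t < 0"
    using last_below[OF t1 cy, of 0] x0 neg by auto
  obtain \<eta> where eta: "\<eta> > 0" "\<And>s. dist s 0 < \<eta> \<Longrightarrow> dist (F s) (F 0) < F 0"
    using F_cont[of 0] F_0 unfolding continuous_at_eps_delta by blast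
  have Fpos: "F s > 0" if "\<bar>s\<bar> < \<eta>" for s
    using eta(2)[of s] that by (auto simp: dist_real_def)
  have "continuous (at a within {0..}) x" using sol_cont[OF sol] a
    by (simp add: continuous_on_eq_continuous_within)
  then obtain d where d: "d > 0" "\<And>t. t \<in> {0..} \<Longrightarrow> dist t a < d \<Longrightarrow> dist (x t) (x a) < \<eta>"
    unfolding continuous_within_eps_delta using eta(1) by blast
  define b where "b = min (a + d/2) t1"
  have ab: "a < b" "b \<le> t1" using a d unfolding b_def by auto
  have "x a \<le> x b"
  proof (rule sol_incr[OF sol a(1) less_imp_le[OF ab(1)]])
    fix t assume t: "a < t" "t < b"
    then have "x t < 0" using a ab by auto
    moreover have "dist (x t) (x a) < \<eta>" using d t a ab unfolding b_def by (auto simp: dist_real_def)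
    ultimately have "\<bar>x t\<bar> < \<eta>" using a by (auto simp: dist_real_def)
    then show "F (x t) \<ge> 0" using Fpos by (simp add: less_imp_le)
  qed
  moreover have "x b < 0" using a ab by auto
  ultimately show False using a by auto
qed

lemma sol_upper: assumes sol: "is_solution F x" and m: "m \<ge> sbar" and t0: "t0 \<ge> 0" "x t0 \<le> m"
  and t: "t \<ge> t0" shows "x t \<le> m"
proof (rule ccontr)
  assume "\<not> x t \<le> m"
  then have gt: "x t > m" by simp
  have cy: "continuous_on {t0..t} x"
    using sol_cont[OF sol] t0 by (auto intro: continuous_on_subset)
  obtain a where a: "t0 \<le> a" "a < t" "x a \<le> m" "\<And>s. a < s \<Longrightarrow> s \<le> t \<Longrightarrow> x s > m"
    using last_below[OF t cy, of m] t0 gt by auto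
  have "x a \<ge> x t"
  proof (rule sol_decr[OF sol])
    fix s assume s: "a < s" "s < t"
    then have "x s > sbar" using a(4)[of s] m by auto
    then show "F (x s) \<le> 0" using F_neg[of "x s"] by simp
  qed (use a t0 in auto)
  then show False using a gt by auto
qed

lemma sol_lower: assumes sol: "is_solution F x" and x0: "x 0 \<ge> 0" and m: "m \<le> sbar" and t0: "t0 \<ge> 0" "x t0 \<ge> m"
  and t: "t \<ge> t0" shows "x t \<ge> m"
proof (rule ccontr)
  assume "\<not> x t \<ge> m"
  then have lt: "x t < m" by simp
  have cy: "continuous_on {t0..t} (\<lambda>s. - x s)"
    using sol_cont[OF sol] t0 by (intro continuous_intros) (auto intro: continuous_on_subset)
  obtain a where a: "t0 \<le> a" "a < t" "x a \<ge> m" "\<And>s. a < s \<Longrightarrow> s \<le> t \<Longrightarrow> x s < m"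
    using last_below[OF t cy, of "-m"] t0 lt by auto
  have "x a \<le> x t"
  proof (rule sol_incr[OF sol])
    fix s assume s: "a < s" "s < t"
    have "x s \<ge> 0" using sol_nonneg[OF sol x0, of s] a t0 s by auto
    moreover have "x s < sbar" using a(4)[of s] s m by auto
    ultimately show "F (x s) \<ge> 0" using F_pos[of "x s"] by auto
  qed (use a t0 in auto)
  then show False using a lt by auto
qed


lemma sol_stable: assumes sol: "is_solution F x" and x0: "x 0 \<ge> 0" and e: "\<bar>x 0 - sbar\<bar> < e"
  and t: "t \<ge> 0" shows "\<bar>x t - sbar\<bar> < e"
proof -
  have "x t \<le> max (x 0) sbar" by (rule sol_upper[OF sol]) (use t in auto)
  moreover have "x t \<ge> min (x 0) sbar" by (rule sol_lower[OF sol x0]) (use t in auto)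
  ultimately show ?thesis using e by auto
qed

lemma sol_conv: assumes sol: "is_solution F x" and x0: "x 0 \<ge> 0" shows "(x \<longlongrightarrow> sbar) at_top"
proof (rule tendstoI)
  fix e :: real assume e: "e > 0"
  have lin: "x T - c * T \<le> x 0" if le: "\<And>t. 0 < t \<Longrightarrow> t < T \<Longrightarrow> F (x t) \<le> c" and T: "T \<ge> 0" for c T
  proof -
    have "(\<lambda>t. x t - c * t) 0 \<ge> (\<lambda>t. x t - c * t) T"
    proof (rule DERIV_nonpos_imp_decreasing_open[OF T])
      fix t assume t: "0 < t" "t < T"
      show "\<exists>y. ((\<lambda>t. x t - c * t) has_real_derivative y) (at t) \<and> y \<le> 0"
        using le[OF t] t sol_deriv[OF sol, of t]
        by (intro exI[of _ "F (x t) - c"]) (auto intro!: derivative_eq_intros)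
    next
      show "continuous_on {0..T} (\<lambda>t. x t - c * t)"
        using sol_cont[OF sol] by (intro continuous_intros) (auto intro: continuous_on_subset)
    qed
    then show ?thesis by simp
  qed
  have lin2: "x T - c * T \<ge> x 0" if le: "\<And>t. 0 < t \<Longrightarrow> t < T \<Longrightarrow> F (x t) \<ge> c" and T: "T \<ge> 0" for c T
  proof -
    have "(\<lambda>t. x t - c * t) 0 \<le> (\<lambda>t. x t - c * t) T"
    proof (rule DERIV_nonneg_imp_increasing_open[OF T])
      fix t assume t: "0 < t" "t < T"
      show "\<exists>y. ((\<lambda>t. x t - c * t) has_real_derivative y) (at t) \<and> y \<ge> 0"
        using le[OF t] t sol_deriv[OF sol, of t]
        by (intro exI[of _ "F (x t) - c"]) (auto intro!: derivative_eq_intros)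
    next
      show "continuous_on {0..T} (\<lambda>t. x t - c * t)"
        using sol_cont[OF sol] by (intro continuous_intros) (auto intro: continuous_on_subset)
    qed
    then show ?thesis by simp
  qed
  show "\<forall>\<^sub>F t in at_top. dist (x t) sbar < e"
  proof (cases "x 0 \<le> sbar")
    case True
    have up: "x t \<le> sbar" if "t \<ge> 0" for t by (rule sol_upper[OF sol]) (use True that in auto)
    have mono: "x t \<ge> x t0" if "t0 \<ge> 0" "t \<ge> t0" for t0 t
      by (rule sol_lower[OF sol x0]) (use up that in auto)
    have "\<exists>T\<ge>0. x T > sbar - e"
    proof (rule ccontr)
      assume "\<not> ?thesis"
      then have small: "\<And>T. T \<ge> 0 \<Longrightarrow> x T \<le> sbar - e" by force
      obtain z where z: "z \<in> {x 0..sbar - e}" "\<And>y. y \<in> {x 0..sbar - e} \<Longrightarrow> F z \<le> F y"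
        using continuous_attains_inf[of "{x 0..sbar - e}" F] F_cont_on small[of 0] by auto
      have Fz: "F z > 0" using F_pos[of z] z(1) x0 e by auto
      have "F (x t) \<ge> F z" if "0 < t" for t
        using z(2)[of "x t"] small[of t] mono[of 0 t] that by auto
      then have "x T - F z * T \<ge> x 0" if "T \<ge> 0" for T using lin2 that by blast
      define c where "c = F z"
      define T where "T = (sbar - x 0) / c + 1"
      have c: "c > 0" using Fz c_def by simp
      have T0: "T \<ge> 0" using c True unfolding T_def by simp
      have cT: "c * T = sbar - x 0 + c" using c unfolding T_def by (simp add: field_simps)
      have "x T - c * T \<ge> x 0" using \<open>\<And>T. T \<ge> 0 \<Longrightarrow> x T - F z * T \<ge> x 0\<close>[OF T0] c_def by simp
      then have "x T > sbar" using cT c by simp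
      then show False using up[OF T0] by simp
    qed
    then obtain T where T: "T \<ge> 0" "x T > sbar - e" by blast
    show ?thesis unfolding eventually_at_top_linorder
    proof (intro exI[of _ T] allI impI)
      fix t assume "t \<ge> T"
      then show "dist (x t) sbar < e" using mono[of T t] up[of t] T by (auto simp: dist_real_def)
    qed
  next
    case False
    have lo: "x t \<ge> sbar" if "t \<ge> 0" for t by (rule sol_lower[OF sol x0]) (use False that in auto)
    have mono: "x t \<le> x t0" if "t0 \<ge> 0" "t \<ge> t0" for t0 t
      by (rule sol_upper[OF sol]) (use lo that in auto)
    have "\<exists>T\<ge>0. x T < sbar + e"
    proof (rule ccontr)
      assume "\<not> ?thesis"
      then have big: "\<And>T. T \<ge> 0 \<Longrightarrow> x T \<ge> sbar + e" by force
      obtain z where z: "z \<in> {sbar + e..x 0}" "\<And>y. y \<in> {sbar + e..x 0} \<Longrightarrow> F y \<le> F z"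
        using continuous_attains_sup[of "{sbar + e..x 0}" F] F_cont_on big[of 0] by auto
      have Fz: "F z < 0" using F_neg[of z] z(1) e by auto
      have "F (x t) \<le> F z" if "0 < t" for t
        using z(2)[of "x t"] big[of t] mono[of 0 t] that by auto
      then have "x T - F z * T \<le> x 0" if "T \<ge> 0" for T using lin that by blast
      define c where "c = - F z"
      define T where "T = (x 0 - sbar) / c + 1"
      have c: "c > 0" using Fz c_def by simp
      have T0: "T \<ge> 0" using c False unfolding T_def by simp
      have cT: "c * T = x 0 - sbar + c" using c unfolding T_def by (simp add: field_simps)
      have h: "x T - F z * T \<le> x 0" using \<open>\<And>T. T \<ge> 0 \<Longrightarrow> x T - F z * T \<le> x 0\<close>[OF T0] .
      have "c * T = - (F z * T)" unfolding c_def by (simp only: mult_minus_left)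
      then have "x T + c * T \<le> x 0" using h by linarith
      then have "x T < sbar" using cT c by simp
      then show False using lo[OF T0] by simp
    qed
    then obtain T where T: "T \<ge> 0" "x T < sbar + e" by blast
    show ?thesis unfolding eventually_at_top_linorder
    proof (intro exI[of _ T] allI impI)
      fix t assume "t \<ge> T"
      then show "dist (x t) sbar < e" using mono[of T t] lo[of t] T by (auto simp: dist_real_def)
    qed
  qed
qed

end


context bdp begin

definition g :: "real \<Rightarrow> real" where "g v = ln (D v / B v)"

lemma B_meas[measurable]: "B \<in> borel_measurable borel"
  using B_cont by (intro borel_measurable_continuous_onI continuous_at_imp_continuous_on) auto
lemma D_meas[measurable]: "D \<in> borel_measurable borel"
  using D_cont by (intro borel_measurable_continuous_onI continuous_at_imp_continuous_on) auto
lemma g_meas[measurable]: "g \<in> borel_measurable borel"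
  unfolding g_def by measurable

lemma g_cont: assumes "v > 0" shows "isCont g v"
proof -
  have "D v / B v > 0" using D_pos[OF assms] B_pos[of v] assms by simp
  then show ?thesis unfolding g_def using B_cont D_cont B_pos[of v] assms
    by (intro continuous_intros) auto
qed

lemma g_cont_on: assumes "a > 0" shows "continuous_on {a..b} g"
  using g_cont assms by (intro continuous_at_imp_continuous_on) auto

lemma g_0: "g 0 = 0" unfolding g_def using D_0 by simp
lemma g_sbar: "g sbar = 0" unfolding g_def using sbar_eq B_pos[of sbar] sbar_pos by simp

lemma g_neg: assumes "0 < v" "v < sbar" shows "g v < 0"
proof -
  have "D v < B v" using F_pos[of v] assms by simp
  then show ?thesis unfolding g_def using D_pos[of v] B_pos[of v] assms by simp
qed

lemma g_pos: assumes "v > sbar" shows "g v > 0"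
proof -
  have "D v > B v" using F_neg[of v] assms by simp
  moreover have "B v > 0" using B_pos[of v] assms sbar_pos by simp
  ultimately show ?thesis unfolding g_def by simp
qed

lemma g_le0: assumes "0 \<le> v" "v \<le> sbar" shows "g v \<le> 0"
  using g_neg[of v] g_0 g_sbar assms by (cases "v = 0"; cases "v = sbar") auto

lemma g_ge0: assumes "sbar \<le> v" shows "g v \<ge> 0"
  using g_pos[of v] g_sbar assms by (cases "v = sbar") auto

lemma B_mono: assumes "0 \<le> v" "v \<le> w" shows "B v \<le> B w"
  unfolding birth_def
  by (intro sum_mono mult_left_mono power_mono) (use assms kb_nonneg in auto)


lemma xlnx_cont: assumes "a > 0" shows "continuous_on {0..a} (\<lambda>v::real. v * ln v)"
proof -
  show ?thesis unfolding continuous_on_eq_continuous_within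
  proof
    fix v assume v: "v \<in> {0..a}"
    show "continuous (at v within {0..a}) (\<lambda>v::real. v * ln v)"
    proof (cases "v = 0")
      case True
      have "((\<lambda>v::real. v * ln v) \<longlongrightarrow> 0) (at_right 0)" by real_asymp
      then show ?thesis using True assms by (simp add: continuous_within at_within_Icc_at_right)
    next
      case False
      then have "v > 0" using v by auto
      then have "isCont (\<lambda>v::real. v * ln v) v" by (intro continuous_intros) auto
      then show ?thesis by (rule continuous_at_imp_continuous_at_within)
    qed
  qed
qed

lemma g_integrable0: "set_integrable lborel {0..sbar} g"
proof -
  obtain m where m: "m \<ge> 1" "kd m > 0" using death_ex by auto
  define C where "C = ln (B sbar) - ln (kd m)"
  define K where "K = \<bar>C\<bar> + real m * \<bar>ln sbar\<bar>"
  define h where "h v = K - real m * ln v" for v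
  have bound: "\<bar>g v\<bar> \<le> h v \<and> h v \<ge> 0" if v: "0 \<le> v" "v \<le> sbar" for v
  proof (cases "v = 0")
    case True
    then show ?thesis using g_0 unfolding h_def K_def by simp
  next
    case False
    then have v0: "v > 0" using v by simp
    have Bv: "B v > 0" "D v > 0" using B_pos[of v] D_pos[of v] v0 by auto
    have e: "\<bar>g v\<bar> = ln (B v) - ln (D v)"
      using g_le0[OF v] Bv unfolding g_def by (simp add: ln_div)
    have l1: "ln (B v) \<le> ln (B sbar)" using B_mono[OF v] Bv by simp
    have "ln (kd m * v ^ m) \<le> ln (D v)"
      using D_ge[of v m] m v0 Bv by (subst ln_le_cancel_iff) auto
    then have l2: "- ln (D v) \<le> - ln (kd m) - real m * ln v"
      using m v0 by (simp add: ln_mult ln_realpow)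
    have 1: "\<bar>g v\<bar> \<le> C - real m * ln v" unfolding C_def using e l1 l2 by linarith
    have "ln v \<le> ln sbar" using v v0 by simp
    then have 2: "real m * ln v \<le> real m * \<bar>ln sbar\<bar>" by (intro mult_left_mono) auto
    have 3: "real m * \<bar>ln sbar\<bar> \<ge> 0" "C \<le> \<bar>C\<bar>" by auto
    show ?thesis using 1 2 3 unfolding h_def K_def by linarith
  qed
  define H where "H v = (K * v + real m * v) - real m * (v * ln v)" for v
  have "(h has_integral (H sbar - H 0)) {0..sbar}"
  proof (rule fundamental_theorem_of_calculus_interior)
    show "0 \<le> sbar" using sbar_pos by simp
    have c1: "continuous_on {0..sbar} (\<lambda>v. K * v + real m * v)" by (intro continuous_intros)
    have c2: "continuous_on {0..sbar} (\<lambda>v. real m * (v * ln v))"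
      by (rule continuous_on_mult_left[OF xlnx_cont[OF sbar_pos]])
    show "continuous_on {0..sbar} H" unfolding H_def by (rule continuous_on_diff[OF c1 c2])
    fix v assume v: "v \<in> {0<..<sbar}"
    have "(H has_real_derivative h v) (at v)" unfolding H_def h_def using v
      by (auto intro!: derivative_eq_intros simp: field_simps)
    then show "(H has_vector_derivative h v) (at v)"
      by (simp add: has_real_derivative_iff_has_vector_derivative)
  qed
  then have "h absolutely_integrable_on {0..sbar}"
    using bound by (intro nonnegative_absolutely_integrable_1) (auto simp: integrable_on_def)
  moreover have "(\<lambda>x. indicator {0..sbar} x *\<^sub>R h x) \<in> borel_measurable lborel"
    unfolding h_def by measurable
  ultimately have hi: "set_integrable lborel {0..sbar} h"
    unfolding set_integrable_def using integrable_completion by blast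
  show ?thesis
    by (rule set_integrable_bound[OF hi]) (use bound in \<open>auto simp: set_borel_measurable_def\<close>)
qed

end


context bdp begin

definition Vf :: "real \<Rightarrow> real" where "Vf s = (LBINT v=ereal sbar..ereal s. g v)"

lemma g_int: assumes "0 \<le> a" "a \<le> b" shows "set_integrable lborel {a..b} g"
proof (cases "a = 0")
  case False
  then show ?thesis using assms g_cont_on[of a b] by (intro borel_integrable_atLeastAtMost') auto
next
  case True
  show ?thesis
  proof (cases "b \<le> sbar")
    case True
    show ?thesis by (rule set_integrable_subset[OF g_integrable0]) (use True assms in auto)
  next
    case False
    have "set_integrable lborel ({0..sbar} \<union> {sbar..b}) g"
      using set_integrable_Un[OF g_integrable0 borel_integrable_atLeastAtMost'[OF g_cont_on[of sbar b]]] sbar_pos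
      by auto
    moreover have "{0..sbar} \<union> {sbar..b} = {a..b}" using True False sbar_pos by auto
    ultimately show ?thesis by simp
  qed
qed

lemma g_iint: assumes "0 \<le> a" "0 \<le> b" shows "interval_lebesgue_integrable lborel (ereal a) (ereal b) g"
proof (cases "a \<le> b")
  case True
  then show ?thesis unfolding interval_lebesgue_integrable_def
    by (auto intro!: set_integrable_subset[OF g_int[OF assms(1) True]])
next
  case False
  then show ?thesis unfolding interval_lebesgue_integrable_def
    using False by (auto intro!: set_integrable_subset[OF g_int[OF assms(2), of a]])
qed

lemma V_add: assumes "0 \<le> s1" "0 \<le> s2" shows "Vf s2 = Vf s1 + (LBINT v=ereal s1..ereal s2. g v)"
proof -
  have "interval_lebesgue_integrable lborel (min (ereal sbar) (min (ereal s1) (ereal s2)))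
           (max (ereal sbar) (max (ereal s1) (ereal s2))) g"
  proof -
    have e1: "min (ereal sbar) (min (ereal s1) (ereal s2)) = ereal (min sbar (min s1 s2))"
      by (simp add: min_def)
    have e2: "max (ereal sbar) (max (ereal s1) (ereal s2)) = ereal (max sbar (max s1 s2))"
      by (simp add: max_def)
    show ?thesis unfolding e1 e2 using assms sbar_pos by (intro g_iint) auto
  qed
  from interval_integral_sum[OF this] show ?thesis unfolding Vf_def by simp
qed

lemma seg_nonpos: assumes "0 \<le> s1" "s1 \<le> s2" "s2 \<le> sbar" shows "(LBINT v=ereal s1..ereal s2. g v) \<le> 0"
proof -
  have "(LBINT v=ereal s1..ereal s2. g v) = (LINT v:{s1..s2}|lborel. g v)"
    using assms by (simp add: interval_integral_Icc)
  also have "\<dots> \<le> (LINT v:{s1..s2}|lborel. 0)"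
    by (rule set_integral_mono[OF g_int]) (use assms g_le0 in \<open>auto simp: set_integrable_def\<close>)
  finally show ?thesis by simp
qed

lemma seg_nonneg: assumes "sbar \<le> s1" "s1 \<le> s2" shows "(LBINT v=ereal s1..ereal s2. g v) \<ge> 0"
proof -
  have "(LBINT v=ereal s1..ereal s2. g v) = (LINT v:{s1..s2}|lborel. g v)"
    using assms by (simp add: interval_integral_Icc)
  also have "\<dots> \<ge> (LINT v:{s1..s2}|lborel. 0)"
    by (rule set_integral_mono[OF _ g_int]) (use assms g_ge0 sbar_pos in \<open>auto simp: set_integrable_def\<close>)
  finally show ?thesis by simp
qed

lemma V_antimono: assumes "0 \<le> s1" "s1 \<le> s2" "s2 \<le> sbar" shows "Vf s2 \<le> Vf s1"
  using V_add[of s1 s2] seg_nonpos[OF assms] assms by simp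

lemma V_mono: assumes "sbar \<le> s1" "s1 \<le> s2" shows "Vf s1 \<le> Vf s2"
  using V_add[of s1 s2] seg_nonneg[OF assms] assms sbar_pos by simp

lemma V_sbar: "Vf sbar = 0" unfolding Vf_def by simp

lemma V_pos_above: assumes "s > sbar" shows "Vf s > 0"
proof -
  have si: "set_integrable lborel {sbar..s} g" using g_int[of sbar s] assms sbar_pos by simp
  have "Vf s = (LINT v:{sbar..s}|lborel. g v)"
    unfolding Vf_def using assms by (simp add: interval_integral_Icc)
  also have "\<dots> = integral {sbar..s} g" by (rule set_borel_integral_eq_integral(2)[OF si])
  finally have eq: "Vf s = integral {sbar..s} g" .
  have cont: "continuous_on {sbar..s} g" using g_cont_on[of sbar s] sbar_pos by simp
  have "integral {sbar..s} g \<ge> 0"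
    using g_ge0 by (intro integral_nonneg integrable_continuous_real cont) auto
  moreover have "integral {sbar..s} g \<noteq> 0"
    using integral_eq_0_iff[OF cont assms] g_ge0 g_pos[OF assms] assms by auto
  ultimately show ?thesis using eq by simp
qed

lemma V_pos_below: assumes "0 < s" "s < sbar" shows "Vf s > 0"
proof -
  have si: "set_integrable lborel {s..sbar} g" using g_int[of s sbar] assms by simp
  have "Vf s = - (LBINT v=ereal s..ereal sbar. g v)"
    unfolding Vf_def by (rule interval_integral_endpoints_reverse)
  also have "(LBINT v=ereal s..ereal sbar. g v) = (LINT v:{s..sbar}|lborel. g v)"
    using assms by (simp add: interval_integral_Icc)
  also have "\<dots> = integral {s..sbar} g" by (rule set_borel_integral_eq_integral(2)[OF si])
  finally have eq: "Vf s = - integral {s..sbar} g" .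
  have cont: "continuous_on {s..sbar} (\<lambda>v. - g v)" using g_cont_on[of s sbar] assms
    by (intro continuous_intros) auto
  have "integral {s..sbar} (\<lambda>v. - g v) \<ge> 0"
    using g_le0 assms by (intro integral_nonneg integrable_continuous_real cont) auto
  moreover have "integral {s..sbar} (\<lambda>v. - g v) \<noteq> 0"
    using integral_eq_0_iff[OF cont assms(2)] g_le0 g_neg[OF assms] assms by auto
  ultimately show ?thesis using eq by simp
qed

lemma V_pos: assumes "0 \<le> s" "s \<noteq> sbar" shows "Vf s > 0"
proof -
  consider "s > sbar" | "0 < s" "s < sbar" | "s = 0" using assms by fastforce
  then show ?thesis
  proof cases
    case 3
    have "Vf (sbar/2) > 0" using V_pos_below[of "sbar/2"] sbar_pos by simp
    also have "Vf (sbar/2) \<le> Vf 0" using V_antimono[of 0 "sbar/2"] sbar_pos by simp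
    finally show ?thesis using 3 by simp
  qed (use V_pos_above V_pos_below in auto)
qed

end



context bdp begin
lemma V_along: assumes sol: "is_solution F x" and x0: "x 0 \<ge> 0" and r: "0 \<le> r" "r \<le> t"
  shows "Vf (x t) \<le> Vf (x r)"
proof -
  have xr: "x r \<ge> 0" using sol_nonneg[OF sol x0] r by simp
  show ?thesis
  proof (cases "x r \<le> sbar")
    case True
    have "x t \<ge> x r" by (rule sol_lower[OF sol x0 True]) (use r in auto)
    moreover have "x t \<le> sbar" by (rule sol_upper[OF sol order_refl]) (use r True in auto)
    ultimately show ?thesis using V_antimono[OF xr] by simp
  next
    case False
    have "x t \<le> x r" by (rule sol_upper[OF sol]) (use r False in auto)
    moreover have "x t \<ge> sbar" by (rule sol_lower[OF sol x0 order_refl]) (use r False in auto)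
    ultimately show ?thesis using V_mono by simp
  qed
qed
end

theorem lemma5p2:
  fixes kb kd :: "nat \<Rightarrow> real" and sbar :: real
  defines "f \<equiv> (\<lambda>s. birth kb s - death kd s)"
      and "V \<equiv> (\<lambda>s::real. LBINT v=ereal sbar..ereal s. ln (death kd v / birth kb v))"
  assumes kb_nonneg: "\<And>n. kb n \<ge> 0" and kd_nonneg: "\<And>n. kd n \<ge> 0"
      and kb_fin: "finite {n. kb n \<noteq> 0}" and kd_fin: "finite {n. kd n \<noteq> 0}"
      and k0: "kb 0 > 0"
      and death_ex: "\<exists>n\<ge>1. kd n > 0"
      and degree: "n_d kd > n_u kb \<or> (n_d kd = n_u kb \<and> kd (n_d kd) > kb (n_u kb))"
      and sbar_pos: "sbar > 0" and sbar_eq: "f sbar = 0"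
      and sbar_unique: "\<And>s. s > 0 \<Longrightarrow> f s = 0 \<Longrightarrow> s = sbar"
      and nondeg: "deriv f sbar \<noteq> 0"
  shows "(\<forall>s\<ge>0. V s \<ge> 0 \<and> (V s = 0 \<longleftrightarrow> s = sbar))
       \<and> (\<forall>x. is_solution f x \<and> x 0 \<ge> 0 \<longrightarrow> antimono_on {0..} (\<lambda>t. V (x t)))
       \<and> (\<forall>\<epsilon>>0. \<exists>\<delta>>0. \<forall>x. is_solution f x \<and> x 0 \<ge> 0 \<and> \<bar>x 0 - sbar\<bar> < \<delta>
              \<longrightarrow> (\<forall>t\<ge>0. \<bar>x t - sbar\<bar> < \<epsilon>))
       \<and> (\<forall>x. is_solution f x \<and> x 0 \<ge> 0 \<longrightarrow> (x \<longlongrightarrow> sbar) at_top)"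
proof -
  interpret bdp kb kd sbar
  proof (unfold_locales)
    show "birth kb sbar - death kd sbar = 0" using sbar_eq unfolding f_def by simp
    show "\<And>s. s > 0 \<Longrightarrow> birth kb s - death kd s = 0 \<Longrightarrow> s = sbar"
      using sbar_unique unfolding f_def by simp
  qed (rule kb_nonneg kd_nonneg kb_fin kd_fin k0 death_ex degree sbar_pos)+
  have Veq: "V = Vf" unfolding V_def Vf_def g_def by (rule refl)
  have feq: "f = F" unfolding f_def by (rule refl)
  have P1: "\<forall>s\<ge>0. Vf s \<ge> 0 \<and> (Vf s = 0 \<longleftrightarrow> s = sbar)"
  proof (intro allI impI)
    fix s :: real assume s: "s \<ge> 0"
    show "Vf s \<ge> 0 \<and> (Vf s = 0 \<longleftrightarrow> s = sbar)"
    proof (cases "s = sbar")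
      case True then show ?thesis using V_sbar by simp
    next
      case False then show ?thesis using V_pos[OF s False] by simp
    qed
  qed
  have P2: "\<forall>x. is_solution F x \<and> x 0 \<ge> 0 \<longrightarrow> antimono_on {0..} (\<lambda>t. Vf (x t))"
  proof (intro allI impI)
    fix x assume x: "is_solution F x \<and> x 0 \<ge> 0"
    show "antimono_on {0..} (\<lambda>t. Vf (x t))" unfolding monotone_on_def
    proof (intro ballI impI)
      fix r t :: real assume "r \<in> {0..}" "t \<in> {0..}" "r \<le> t"
      then show "Vf (x t) \<le> Vf (x r)" using V_along[of x r t] x by simp
    qed
  qed
  have P3: "\<forall>\<epsilon>>0. \<exists>\<delta>>0. \<forall>x. is_solution F x \<and> x 0 \<ge> 0 \<and> \<bar>x 0 - sbar\<bar> < \<delta>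
              \<longrightarrow> (\<forall>t\<ge>0. \<bar>x t - sbar\<bar> < \<epsilon>)"
  proof (intro allI impI)
    fix e :: real assume e: "e > 0"
    show "\<exists>\<delta>>0. \<forall>x. is_solution F x \<and> x 0 \<ge> 0 \<and> \<bar>x 0 - sbar\<bar> < \<delta> \<longrightarrow> (\<forall>t\<ge>0. \<bar>x t - sbar\<bar> < e)"
      using e sol_stable by (intro exI[of _ e]) blast
  qed
  have P4: "\<forall>x. is_solution F x \<and> x 0 \<ge> 0 \<longrightarrow> (x \<longlongrightarrow> sbar) at_top"
    using sol_conv by simp
  show ?thesis unfolding Veq feq using P1 P2 P3 P4 by (intro conjI) assumption+
qed


end
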